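(* For a threshold $h\ge0$, the AMC-$h$ policy is temporal Nash stable if and only if $h=0$.
   Context: Players: a finite set $N=\{a_1,\dots,a_n\}$. A characteristic function is $v:2^N\to\mathbb{R}_{\ge 0}$ with $v(\emptyset)=0$, monotone and bounded: $\mathsf{min}\le v(S)\le v(T)\le\mathsf{max}$ for all nonempty $S\subseteq T\subseteq N$, for fixed constants $0<\mathsf{min}\le\mathsf{max}$. Online process: an arrival order is a permutation $\pi=(\pi_1,\dots,\pi_n)$ of $N$; player $\pi_t$ arrives at time $t$; $\pi_{\prec t}$ is the set of players arriving before time $t$ and $\pi^{-1}(i)$ the arrival time of $i$. For $S\subseteq N$, $\pi_{|S}$ denotes the players of $S$ in the relative order of $\pi$. Let $C^{t-1}$ be the coalition structure of players arrived before time $t$ ($C^0=\emptyset$). At time $t$, player $\pi_t$ either joins an existing coalition $S\in C^{t-1}$ or forms $\{\pi_t\}$ (choice $S=\emptyset$); decisions are never revised. AMC-$h$ policy: when player $i$ joins coalition $S$, let $\mathsf{MC}_i=v((\pi_{\prec\pi^{-1}(i)}\cap S)\cup\{i\})-v(\pi_{\prec\pi^{-1}(i)}\cap S)$. If $\mathsf{MC}_i\le h$, all of $\mathsf{MC}_i$ is added to the share of the last player of $S$ who arrived before $i$; if $\mathsf{MC}_i>h$, that previous player additionally receives $h$ and $i$ receives $\mathsf{MC}_i-h$; if $i$ is the first player of her coalition, the "previous player" is $i$ herself. Shares already assigned are never reduced; $\varphi_i(S,\pi_{|S})$ is $i$'s accumulated share when the coalition is $S$. Greedy players: $\pi_t$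 chooses $S\in C^{t-1}\cup\{\emptyset\}$ maximizing $\varphi_{\pi_t}(S\cup\{\pi_t\},\pi_{|S\cup\{\pi_t\}})$ (predetermined tie-breaking). $C_g$ is the final structure; $\overline{C}_g^{t}\subseteq C_g$ is the set of final coalitions whose first-arriving member arrived at time at most $t$. Temporal Nash stability: for every $v$ and $\pi$, every $S\in C_g$ and every $i\in S$, there is no $S'\in\overline{C}_g^{\pi^{-1}(i)-1}\cup\{\emptyset\}$ with $\varphi_i(S'\cup\{i\},\pi_{|S'\cup\{i\}})>\varphi_i(S,\pi_{|S})$. *)

theory Defs
  imports Main Complex_Main
begin

text \<open>Players are natural numbers; an arrival order is a duplicate-free list
  sigma whose set is the player set N.\<close>

definition mc :: "(nat set \<Rightarrow> real) \<Rightarrow> nat list \<Rightarrow> nat \<Rightarrow> real" where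
  "mc v \<sigma> k = v (set (take (Suc k) \<sigma>)) - v (set (take k \<sigma>))"

text \<open>Amount given to player i by the arrival of the k-th member under AMC-h.\<close>

definition amc_gift :: "real \<Rightarrow> (nat set \<Rightarrow> real) \<Rightarrow> nat list \<Rightarrow> nat \<Rightarrow> nat \<Rightarrow> real" where
  "amc_gift h v \<sigma> k i =
     (if k = 0 then (if \<sigma> ! 0 = i then mc v \<sigma> 0 else 0)
      else (if \<sigma> ! (k - 1) = i then (if mc v \<sigma> k \<le> h then mc v \<sigma> k else h) else 0)
         + (if \<sigma> ! k = i then (if mc v \<sigma> k \<le> h then 0 else mc v \<sigma> k - h) else 0))"

definition amc_share :: "real \<Rightarrow> (nat set \<Rightarrow> real) \<Rightarrow> nat list \<Rightarrow> nat \<Rightarrow> real" where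
  "amc_share h v \<sigma> i = (\<Sum>k<length \<sigma>. amc_gift h v \<sigma> k i)"

definition restr :: "nat list \<Rightarrow> nat set \<Rightarrow> nat list" where
  "restr \<pi> S = filter (\<lambda>x. x \<in> S) \<pi>"

definition admissible :: "nat list \<Rightarrow> (nat set \<Rightarrow> real) \<Rightarrow> real \<Rightarrow> real \<Rightarrow> bool" where
  "admissible \<pi> v mn mx \<longleftrightarrow> v {} = 0 \<and> 0 < mn \<and> mn \<le> mx \<and>
     (\<forall>S T. S \<noteq> {} \<longrightarrow> S \<subseteq> T \<longrightarrow> T \<subseteq> set \<pi> \<longrightarrow> mn \<le> v S \<and> v S \<le> v T \<and> v T \<le> mx)"

text \<open>greedy h v pi t C: C is a coalition structure that greedy players can
  produce after the first t arrivals (with some predetermined tie-breaking).\<close>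

inductive greedy :: "real \<Rightarrow> (nat set \<Rightarrow> real) \<Rightarrow> nat list \<Rightarrow> nat \<Rightarrow> nat set set \<Rightarrow> bool"
  for h v \<pi> where
  start: "greedy h v \<pi> 0 {}"
| step: "\<lbrakk> greedy h v \<pi> t C; t < length \<pi>; S \<in> insert {} C;
           \<forall>S'\<in>insert {} C. amc_share h v (restr \<pi> (S' \<union> {\<pi> ! t})) (\<pi> ! t)
                              \<le> amc_share h v (restr \<pi> (S \<union> {\<pi> ! t})) (\<pi> ! t) \<rbrakk>
         \<Longrightarrow> greedy h v \<pi> (Suc t) (insert (S \<union> {\<pi> ! t}) (C - {S}))"

definition arr :: "nat list \<Rightarrow> nat \<Rightarrow> nat" where
  "arr \<pi> i = (LEAST k. k < length \<pi> \<and> \<pi> ! k = i)"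

definition temporal_nash_stable :: "real \<Rightarrow> bool" where
  "temporal_nash_stable h \<longleftrightarrow>
     (\<forall>\<pi> v mn mx Cg. distinct \<pi> \<longrightarrow> admissible \<pi> v mn mx \<longrightarrow> greedy h v \<pi> (length \<pi>) Cg \<longrightarrow>
        (\<forall>S\<in>Cg. \<forall>i\<in>S. \<not> (\<exists>S'\<in>{S'\<in>Cg. \<exists>j\<in>S'. arr \<pi> j < arr \<pi> i} \<union> {{}}.
            amc_share h v (restr \<pi> (S' \<union> {i})) i > amc_share h v (restr \<pi> S) i)))"

end

theory Submission imports Defs begin

definition vex :: "real \<Rightarrow> nat set \<Rightarrow> real" where
 "vex h S = (if S = {} then 0 else 1 + (if 0\<in>S \<and> (1\<in>S \<or> 2\<in>S) then h+1 else 0)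
     + (if 0\<in>S \<and> 1\<in>S \<and> 2\<in>S then 1 else 0))"

lemma arr_nth: "distinct \<pi> \<Longrightarrow> k < length \<pi> \<Longrightarrow> arr \<pi> (\<pi>!k) = k"
  unfolding arr_def
  by (rule Least_equality) (auto simp: nth_eq_iff_index_eq leI)

lemma ex_unstable:
  assumes h: "h > 0"
  shows "\<not> temporal_nash_stable h"
proof
  assume st: "temporal_nash_stable h"
  let ?p = "[0,1,2::nat]"
  have adm: "admissible ?p (vex h) 1 (h+3)"
    unfolding admissible_def vex_def using h by (auto)
  have g1: "greedy h (vex h) ?p 1 {{0}}"
    using greedy.step[OF greedy.start, of "?p" "{}" h "vex h"] by simp
  have g2: "greedy h (vex h) ?p 2 {{1},{0}}"
    using greedy.step[OF g1, of "{}"] h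
    by (simp add: amc_share_def amc_gift_def restr_def mc_def vex_def lessThan_Suc numeral_eq_Suc insert_commute)
  have g3: "greedy h (vex h) ?p 3 {{0,2},{1}}"
    using greedy.step[OF g2, of "{0}"] h
    by (simp add: amc_share_def amc_gift_def restr_def mc_def vex_def lessThan_Suc numeral_eq_Suc insert_commute)
  have a0: "arr ?p 0 = 0" using arr_nth[of ?p 0] by simp
  have a1: "arr ?p 1 = 1" using arr_nth[of ?p 1] by simp
  have "amc_share h (vex h) (restr ?p ({0,2} \<union> {1})) 1 > amc_share h (vex h) (restr ?p {1}) 1"
    using h by (simp add: amc_share_def amc_gift_def restr_def mc_def vex_def lessThan_Suc numeral_eq_Suc insert_commute)
  hence "\<exists>S'\<in>{S'\<in>{{0,2},{1}}. \<exists>j\<in>S'. arr ?p j < arr ?p 1} \<union> {{}}.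
            amc_share h (vex h) (restr ?p (S' \<union> {1})) 1 > amc_share h (vex h) (restr ?p {1}) 1"
    using a0 a1 by (intro bexI[of _ "{0,2}"]) auto
  moreover have "\<forall>S\<in>{{0,2},{1::nat}}. \<forall>i\<in>S. \<not> (\<exists>S'\<in>{S'\<in>{{0,2},{1}}. \<exists>j\<in>S'. arr ?p j < arr ?p i} \<union> {{}}.
            amc_share h (vex h) (restr ?p (S' \<union> {i})) i > amc_share h (vex h) (restr ?p S) i)"
    using st[unfolded temporal_nash_stable_def, rule_format, of ?p "vex h" 1 "h+3" "{{0,2},{1}}"] adm g3
    by (simp add: numeral_eq_Suc)
  ultimately show False by blast
qed
definition before :: "nat list \<Rightarrow> nat \<Rightarrow> nat set" where
  "before \<pi> i = set (take (arr \<pi> i) \<pi>)"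

definition ff :: "(nat set \<Rightarrow> real) \<Rightarrow> nat set \<Rightarrow> nat \<Rightarrow> real" where
  "ff v A i = v (A \<union> {i}) - v A"

lemma share0:
  assumes dist: "distinct \<pi>" and adm: "admissible \<pi> v mn mx" and X: "X \<subseteq> set \<pi>" and iX: "i \<in> X"
  shows "amc_share 0 v (restr \<pi> X) i = ff v (X \<inter> before \<pi> i) i"
proof -
  have "i \<in> set \<pi>" using X iX by auto
  then obtain a where a: "a < length \<pi>" "\<pi>!a = i" by (auto simp: in_set_conv_nth)
  have arr: "arr \<pi> i = a" using arr_nth[OF dist a(1)] a(2) by simp
  define ys where "ys = filter (\<lambda>x. x \<in> X) (take a \<pi>)"
  define zs where "zs = filter (\<lambda>x. x \<in> X) (drop (Suc a) \<pi>)"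
  have pi: "\<pi> = take a \<pi> @ i # drop (Suc a) \<pi>" using id_take_nth_drop[OF a(1)] a(2) by simp
  define \<sigma> where "\<sigma> = restr \<pi> X"
  have sig: "\<sigma> = ys @ i # zs"
    unfolding \<sigma>_def restr_def ys_def zs_def using iX by (subst pi) simp
  have dsig: "distinct \<sigma>" unfolding \<sigma>_def restr_def using dist by simp
  have sigpi: "set \<sigma> \<subseteq> set \<pi>" unfolding \<sigma>_def restr_def by auto
  have setys: "set ys = X \<inter> before \<pi> i" unfolding ys_def before_def arr by auto
  have iy: "\<sigma> ! length ys = i" using sig by simp
  have ly: "length ys < length \<sigma>" using sig by simp
  have eqi: "\<sigma> ! k = i \<longleftrightarrow> k = length ys" if "k < length \<sigma>" for k
    using nth_eq_iff_index_eq[OF dsig that ly] iy by auto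
  have mcnn: "mc v \<sigma> k \<ge> 0" if "0 < k" "k < length \<sigma>" for k
  proof -
    have "set (take k \<sigma>) \<noteq> {}" using that by (cases \<sigma>) auto
    moreover have "set (take k \<sigma>) \<subseteq> set (take (Suc k) \<sigma>)" by (simp add: set_take_subset_set_take)
    moreover have "set (take (Suc k) \<sigma>) \<subseteq> set \<pi>" using sigpi set_take_subset by fastforce
    moreover have mono: "\<And>S T. S \<noteq> {} \<Longrightarrow> S \<subseteq> T \<Longrightarrow> T \<subseteq> set \<pi> \<Longrightarrow> v S \<le> v T"
      using adm unfolding admissible_def by blast
    ultimately have "v (set (take k \<sigma>)) \<le> v (set (take (Suc k) \<sigma>))" by blast
    thus ?thesis unfolding mc_def by simp
  qed
  have gift: "amc_gift 0 v \<sigma> k i = (if k = length ys then mc v \<sigma> k else 0)" if "k < length \<sigma>" for k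
  proof (cases "k = 0")
    case True thus ?thesis using eqi[OF that] by (simp add: amc_gift_def)
  next
    case False
    hence "mc v \<sigma> k \<ge> 0" using mcnn that by simp
    thus ?thesis using False eqi[OF that] by (cases "k = length ys") (simp_all add: amc_gift_def)
  qed
  have "amc_share 0 v \<sigma> i = (\<Sum>k<length \<sigma>. if k = length ys then mc v \<sigma> k else 0)"
    unfolding amc_share_def using gift by (intro sum.cong) auto
  also have "\<dots> = mc v \<sigma> (length ys)" using ly by simp
  also have "\<dots> = ff v (set ys) i" unfolding mc_def ff_def sig by simp
  finally show ?thesis unfolding \<sigma>_def setys .
qed

lemma notin_take: "distinct \<pi> \<Longrightarrow> t < length \<pi> \<Longrightarrow> \<pi>!t \<notin> set (take t \<pi>)"
  by (metis distinct_take distinct_append take_Suc_conv_app_nth distinct.simps(2) list.set_intros(1) disjoint_iff)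

lemma before_take:
  assumes "distinct \<pi>" "i \<in> set (take t \<pi>)"
  shows "before \<pi> i \<subseteq> set (take t \<pi>)"
proof -
  obtain j where j: "j < length (take t \<pi>)" "take t \<pi> ! j = i" using assms(2) by (auto simp: in_set_conv_nth)
  have "arr \<pi> i = j" using arr_nth[OF assms(1), of j] j by simp
  thus ?thesis unfolding before_def using j by (simp add: set_take_subset_set_take)
qed

lemma greedy_inv:
  assumes "greedy h v \<pi> t C" "h = 0" "distinct \<pi>" "admissible \<pi> v mn mx"
  shows "(\<forall>S\<in>C. S \<subseteq> set (take t \<pi>)) \<and>
    (\<forall>S\<in>C. \<forall>i\<in>S. \<forall>S'\<in>insert {} C. ff v (S' \<inter> before \<pi> i) i \<le> ff v (S \<inter> before \<pi> i) i)"
  using assms(1)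
proof (induction rule: greedy.induct)
  case start
  then show ?case by simp
next
  case (step t C S0)
  define x where "x = \<pi> ! t"
  define B where "B = set (take t \<pi>)"
  have dist: "distinct \<pi>" and adm: "admissible \<pi> v mn mx" using assms by auto
  have xB: "x \<notin> B" unfolding x_def B_def using notin_take[OF dist step(2)] .
  have bx: "before \<pi> x = B" unfolding before_def B_def x_def arr_nth[OF dist step(2)] ..
  have tS: "set (take (Suc t) \<pi>) = insert x B" unfolding x_def B_def
    using take_Suc_conv_app_nth[OF step(2)] by simp
  have sub: "\<forall>S\<in>C. S \<subseteq> B" using step.IH B_def by simp
  have S0B: "S0 \<subseteq> B" using step(3) sub by auto
  have Bpi: "B \<subseteq> set \<pi>" unfolding B_def by (rule set_take_subset)
  have xpi: "x \<in> set \<pi>" unfolding x_def using step(2) by simp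
  have stab: "\<forall>S\<in>C. \<forall>i\<in>S. \<forall>S'\<in>insert {} C. ff v (S' \<inter> before \<pi> i) i \<le> ff v (S \<inter> before \<pi> i) i"
    using step.IH by simp
  have gr: "ff v S' x \<le> ff v S0 x" if "S' \<in> insert {} C" for S'
  proof -
    have S'B: "S' \<subseteq> B" using that sub by auto
    have "amc_share h v (restr \<pi> (S' \<union> {x})) x \<le> amc_share h v (restr \<pi> (S0 \<union> {x})) x"
      using step(4) that x_def by blast
    moreover have "amc_share 0 v (restr \<pi> (S' \<union> {x})) x = ff v S' x"
      using share0[OF dist adm, of "S' \<union> {x}" x] S'B Bpi xpi xB bx
      by (simp add: Int_absorb2 Int_Un_distrib2 Int_absorb1) 
    moreover have "amc_share 0 v (restr \<pi> (S0 \<union> {x})) x = ff v S0 x"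
      using share0[OF dist adm, of "S0 \<union> {x}" x] S0B Bpi xpi xB bx
      by (simp add: Int_absorb2 Int_Un_distrib2 Int_absorb1)
    ultimately show ?thesis using assms(2) by simp
  qed
  let ?C' = "insert (S0 \<union> {x}) (C - {S0})"
  have part1: "\<forall>S\<in>?C'. S \<subseteq> set (take (Suc t) \<pi>)" using sub S0B tS by auto
  have part2: "ff v (S' \<inter> before \<pi> i) i \<le> ff v (S \<inter> before \<pi> i) i"
    if S: "S \<in> ?C'" and i: "i \<in> S" and S': "S' \<in> insert {} ?C'" for S i S'
  proof (cases "i = x")
    case True
    have "S \<notin> C"
    proof
      assume "S \<in> C"
      hence "S \<subseteq> B" using sub by simp
      thus False using i True xB by auto
    qed
    hence Sx: "S = S0 \<union> {x}" using S by blast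
    have "S \<inter> before \<pi> i = S0" using Sx True bx S0B xB by auto
    moreover obtain S'' where "S'' \<in> insert {} C" "S' \<inter> before \<pi> i = S''"
    proof -
      consider "S' = {}" | "S' = S0 \<union> {x}" | "S' \<in> C" using S' by auto
      thus ?thesis
      proof cases
        case 1 thus ?thesis using that by auto
      next
        case 2 thus ?thesis using that[of S0] step(3) True bx S0B xB by auto
      next
        case 3 thus ?thesis using that[of S'] True bx sub by auto
      qed
    qed
    ultimately show ?thesis using gr True by simp
  next
    case False
    have S0C: "S0 \<noteq> {} \<Longrightarrow> S0 \<in> C" using step(3) by blast
    have cs: "S = S0 \<union> {x} \<or> S \<in> C" using S by blast
    obtain So where So: "So \<in> C" "i \<in> So" "S \<inter> before \<pi> i = So \<inter> before \<pi> i"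
    proof (cases "S \<in> C")
      case True thus ?thesis using that[of S] i by blast
    next
      case F: False
      hence SS: "S = S0 \<union> {x}" using cs by blast
      hence iS0: "i \<in> S0" using i False by blast
      have iB: "i \<in> B" using iS0 S0B by blast
      have bi: "before \<pi> i \<subseteq> B" using before_take[OF dist, of i t] iB B_def by simp
      have xbi: "x \<notin> before \<pi> i" using bi xB by blast
      have "S \<inter> before \<pi> i = S0 \<inter> before \<pi> i" using SS xbi by blast
      thus ?thesis using that[of S0] iS0 S0C by blast
    qed
    have iB: "i \<in> B" using So(1,2) sub by blast
    have bi: "before \<pi> i \<subseteq> B" using before_take[OF dist, of i t] iB B_def by simp
    have xbi: "x \<notin> before \<pi> i" using bi xB by blast
    obtain S'' where S'': "S'' \<in> insert {} C" "S' \<inter> before \<pi> i = S'' \<inter> before \<pi> i"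
    proof -
      have "S' = {} \<or> S' = S0 \<union> {x} \<or> S' \<in> C" using S' by blast
      moreover have "S0 \<in> insert {} C" using step(3) .
      moreover have "(S0 \<union> {x}) \<inter> before \<pi> i = S0 \<inter> before \<pi> i" using xbi by blast
      ultimately show ?thesis
      proof (elim disjE)
        assume "S' = {}" thus ?thesis using that[of "{}"] by simp
      next
        assume "S' = S0 \<union> {x}" thus ?thesis using that[of S0] step(3) xbi by blast
      next
        assume "S' \<in> C" thus ?thesis using that[of S'] by simp
      qed
    qed
    have "ff v (S'' \<inter> before \<pi> i) i \<le> ff v (So \<inter> before \<pi> i) i"
      using bspec[OF bspec[OF bspec[OF stab So(1)] So(2)] S''(1)] .
    thus ?thesis using So(3) S''(2) by simp
  qed
  show ?case
    apply (fold x_def)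
    apply (intro conjI)
     apply (rule part1)
    by (intro ballI part2)
qed

lemma stable0: "temporal_nash_stable 0"
  unfolding temporal_nash_stable_def
proof (intro allI impI ballI notI)
  fix \<pi> v mn mx Cg S i
  assume dist: "distinct \<pi>" and adm: "admissible \<pi> v mn mx" and g: "greedy 0 v \<pi> (length \<pi>) Cg"
    and S: "S \<in> Cg" and i: "i \<in> S"
    and ex: "\<exists>S'\<in>{S' \<in> Cg. \<exists>j\<in>S'. arr \<pi> j < arr \<pi> i} \<union> {{}}.
            amc_share 0 v (restr \<pi> S) i < amc_share 0 v (restr \<pi> (S' \<union> {i})) i"
  from ex obtain S' where S'0: "S' \<in> {S' \<in> Cg. \<exists>j\<in>S'. arr \<pi> j < arr \<pi> i} \<union> {{}}"
    and lt: "amc_share 0 v (restr \<pi> S) i < amc_share 0 v (restr \<pi> (S' \<union> {i})) i" by blast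
  from S'0 have S': "S' \<in> insert {} Cg" by blast
  note inv = greedy_inv[OF g refl dist adm]
  have sub: "\<forall>S\<in>Cg. S \<subseteq> set \<pi>" using inv by simp
  have ipi: "i \<in> set \<pi>" using sub S i by auto
  have ib: "i \<notin> before \<pi> i"
  proof -
    obtain a where a: "a < length \<pi>" "\<pi>!a = i" using ipi by (auto simp: in_set_conv_nth)
    show ?thesis unfolding before_def using arr_nth[OF dist a(1)] a notin_take[OF dist a(1)] by simp
  qed
  have e1: "amc_share 0 v (restr \<pi> S) i = ff v (S \<inter> before \<pi> i) i"
    using share0[OF dist adm, of S i] sub S i by auto
  have e2: "amc_share 0 v (restr \<pi> (S' \<union> {i})) i = ff v (S' \<inter> before \<pi> i) i"
  proof -
    have "S' \<union> {i} \<subseteq> set \<pi>" using S' sub ipi by auto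
    hence "amc_share 0 v (restr \<pi> (S' \<union> {i})) i = ff v ((S' \<union> {i}) \<inter> before \<pi> i) i"
      using share0[OF dist adm, of "S' \<union> {i}" i] by auto
    moreover have "(S' \<union> {i}) \<inter> before \<pi> i = S' \<inter> before \<pi> i" using ib by auto
    ultimately show ?thesis by simp
  qed
  have st: "\<forall>S\<in>Cg. \<forall>i\<in>S. \<forall>S'\<in>insert {} Cg. ff v (S' \<inter> before \<pi> i) i \<le> ff v (S \<inter> before \<pi> i) i"
    using inv by (rule conjunct2)
  have "ff v (S' \<inter> before \<pi> i) i \<le> ff v (S \<inter> before \<pi> i) i" using bspec[OF bspec[OF bspec[OF st S] i] S'] .
  thus False using lt e1 e2 by simp
qed

theorem proposition4:
  fixes h :: real
  assumes "h \<ge> 0"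
  shows "temporal_nash_stable h \<longleftrightarrow> h = 0"
proof
  assume "temporal_nash_stable h"
  thus "h = 0" using ex_unstable[of h] assms by fastforce
next
  assume "h = 0"
  thus "temporal_nash_stable h" using stable0 by simp
qed

end
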